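(* Let $\mathbf W_1,\mathbf W_2$ be independent $p$-dimensional standard Brownian motions and $\eta>0$. Define, for $1\le s\le t<\infty$, $$D_\eta(s,t)=t^{-\frac32-\eta}\|(t-s)\mathbf W_2(1)+t\mathbf W_1(s-1)-s\mathbf W_1(t-1)\|_{I_p}.$$ Then the function $D_\eta$ on $\{(s,t):1\le s\le t<\infty\}$ is almost surely bounded and uniformly continuous.
   Context: $\|\mathbf y\|_{I_p}=\sqrt{\mathbf y^\top\mathbf y/p}$ for $\mathbf y\in\mathbb R^p$. *)

theory Defs
  imports "HOL-Probability.Probability"
begin

definition normIp :: "real ^ 'n \<Rightarrow> real" where
  "normIp y = sqrt ((y \<bullet> y) / real CARD('n))"

definition indep_std_BMs :: "'a measure \<Rightarrow> 'i set \<Rightarrow> ('i \<Rightarrow> real \<Rightarrow> 'a \<Rightarrow> real) \<Rightarrow> bool" where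
  "indep_std_BMs M I B \<longleftrightarrow>
     prob_space M \<and>
     (\<forall>i\<in>I. \<forall>t\<ge>0. B i t \<in> borel_measurable M) \<and>
     (\<forall>i\<in>I. \<forall>\<omega>\<in>space M. B i 0 \<omega> = 0 \<and> continuous_on {0..} (\<lambda>t. B i t \<omega>)) \<and>
     (\<forall>(n::nat) (ts::nat \<Rightarrow> real). 0 \<le> ts 0 \<and> (\<forall>k<n. ts k < ts (Suc k)) \<longrightarrow>
        prob_space.indep_vars M (\<lambda>_. borel)
          (\<lambda>(i, k) \<omega>. B i (ts (Suc k)) \<omega> - B i (ts k) \<omega>) (I \<times> {..<n}) \<and>
        (\<forall>i\<in>I. \<forall>k<n. distributed M lborel (\<lambda>\<omega>. B i (ts (Suc k)) \<omega> - B i (ts k) \<omega>)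
            (normal_density 0 (sqrt (ts (Suc k) - ts k)))))"

text \<open>Two independent p-dimensional standard Brownian motions: all 2p coordinate
  processes are mutually independent standard Brownian motions.\<close>
definition indep_std_BM_pair :: "'a measure \<Rightarrow> (real \<Rightarrow> 'a \<Rightarrow> real ^ 'p) \<Rightarrow> (real \<Rightarrow> 'a \<Rightarrow> real ^ 'p) \<Rightarrow> bool" where
  "indep_std_BM_pair M W1 W2 \<longleftrightarrow>
     indep_std_BMs M (UNIV :: (bool \<times> 'p) set)
       (\<lambda>(j, i) t \<omega>. (if j then W2 t \<omega> else W1 t \<omega>) $ i)"

definition D_eta :: "real \<Rightarrow> (real \<Rightarrow> 'a \<Rightarrow> real ^ 'p) \<Rightarrow> (real \<Rightarrow> 'a \<Rightarrow> real ^ 'p) \<Rightarrow> 'a \<Rightarrow> real \<times> real \<Rightarrow> real" where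
  "D_eta \<eta> W1 W2 \<omega> st = (case st of (s, t) \<Rightarrow>
     t powr (- 3/2 - \<eta>) * normIp ((t - s) *\<^sub>R W2 1 \<omega> + t *\<^sub>R W1 (s - 1) \<omega> - s *\<^sub>R W1 (t - 1) \<omega>))"

end

theory Submission
  imports Defs
begin

lemma normal_tail4:
  assumes "prob_space M" "distributed M lborel X (\<lambda>x. ennreal (normal_density 0 \<sigma> x))" "\<sigma> > 0" "c > 0"
  shows "measure M {\<omega>\<in>space M. c < \<bar>X \<omega>\<bar>} \<le> 3 * \<sigma>^4 / c^4"
proof -
  interpret prob_space M by fact
  have Xm: "X \<in> measurable M lborel" using assms(2) by (rule distributed_measurable)
  define A where "A = {x::real. c < \<bar>x\<bar>}"
  have Asets: "A \<in> sets lborel" unfolding A_def by measurable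
  have eq: "X -` A \<inter> space M = {\<omega>\<in>space M. c < \<bar>X \<omega>\<bar>}" unfolding A_def by auto
  have "emeasure M {\<omega>\<in>space M. c < \<bar>X \<omega>\<bar>} = (\<integral>\<^sup>+x. ennreal (normal_density 0 \<sigma> x) * indicator A x \<partial>lborel)"
    using distributed_emeasure[OF assms(2) Asets] eq by simp
  also have "\<dots> \<le> (\<integral>\<^sup>+x. ennreal (normal_density 0 \<sigma> x * (x^(2*2) / c^4)) \<partial>lborel)"
  proof (rule nn_integral_mono)
    fix x :: real
    have "indicator A x \<le> x^(2*2) / c^4"
    proof (cases "x \<in> A")
      case True
      then have "c < \<bar>x\<bar>" unfolding A_def by simp
      then have "c^4 \<le> \<bar>x\<bar>^4" using assms(4) by (intro power_mono) auto
      then show ?thesis using True assms(4) by (simp add: power_even_abs)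
    qed simp
    then have r: "normal_density 0 \<sigma> x * indicator A x \<le> normal_density 0 \<sigma> x * (x^(2*2) / c^4)"
      by (intro mult_left_mono) (simp_all add: normal_density_nonneg)
    have e: "ennreal (normal_density 0 \<sigma> x) * indicator A x = ennreal (normal_density 0 \<sigma> x * indicator A x)"
      by (simp add: indicator_def)
    show "ennreal (normal_density 0 \<sigma> x) * indicator A x \<le> ennreal (normal_density 0 \<sigma> x * (x^(2*2) / c^4))"
      unfolding e using r by (rule ennreal_leI)
  qed
  also have "\<dots> = ennreal (3 * \<sigma>^4 / c^4)"
  proof -
    have hb: "has_bochner_integral lborel (\<lambda>x. normal_density 0 \<sigma> x * (x - 0) ^ (2 * 2)) (fact (2 * 2) / ((2 / \<sigma>\<^sup>2)^2 * fact 2))"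
      by (rule normal_moment_even) (use assms(3) in simp)
    have "fact (2 * 2) / ((2 / \<sigma>\<^sup>2)^2 * fact 2) = 3 * \<sigma>^4"
      using assms(3) by (simp add: fact_numeral field_simps power2_eq_square power4_eq_xxxx)
    then have hb2: "has_bochner_integral lborel (\<lambda>x. normal_density 0 \<sigma> x * x ^ (2 * 2) * (1/c^4)) (3 * \<sigma>^4 * (1/c^4))"
      using has_bochner_integral_mult_left[OF hb, of "1/c^4"] by (simp add: mult.commute)
    have "(\<integral>\<^sup>+x. ennreal (normal_density 0 \<sigma> x * (x^(2*2) / c^4)) \<partial>lborel)
        = ennreal (\<integral>x. normal_density 0 \<sigma> x * x ^ (2 * 2) * (1/c^4) \<partial>lborel)"
      apply (subst nn_integral_eq_integral[symmetric])
      using hb2 apply (simp add: has_bochner_integral_iff)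
      apply (simp add: normal_density_nonneg)
      apply simp
      done
    also have "\<dots> = ennreal (3 * \<sigma>^4 / c^4)" using hb2 by (simp add: has_bochner_integral_iff)
    finally show ?thesis .
  qed
  finally have "ennreal (measure M {\<omega>\<in>space M. c < \<bar>X \<omega>\<bar>}) \<le> ennreal (3 * \<sigma>^4 / c^4)"
    by (simp add: emeasure_eq_measure)
  then show ?thesis using assms by (simp add: ennreal_le_iff)
qed

lemma dyadic_bound:
  fixes f :: "real \<Rightarrow> real"
  assumes L: "L > 0" and f0: "f 0 = 0" and r: "r \<ge> 0"
    and inc: "\<And>k j. j < 2^k \<Longrightarrow> \<bar>f ((real j + 1) * L / 2^k) - f (real j * L / 2^k)\<bar> \<le> c * r^k"
  shows "j \<le> 2^K \<Longrightarrow> \<bar>f (real j * L / 2^K)\<bar> \<le> c * (\<Sum>k\<le>K. r^k)"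
proof (induction K arbitrary: j)
  case 0
  then have "j = 0 \<or> j = 1" by auto
  then show ?case
  proof
    assume "j = 0" then show ?thesis using inc[of 0 0] by (simp add: f0)
  next
    assume "j = 1" then show ?thesis using inc[of 0 0] by (simp add: f0)
  qed
next
  case (Suc K)
  have cpos: "c \<ge> 0" using inc[of 0 0] by simp
  have mono: "c * (\<Sum>k\<le>K. r^k) \<le> c * (\<Sum>k\<le>Suc K. r^k)"
    using cpos r by (intro mult_left_mono) (simp_all)
  show ?case
  proof (cases "even j")
    case True
    then obtain i where j: "j = 2*i" by auto
    with Suc.prems have "i \<le> 2^K" by simp
    from Suc.IH[OF this] have "\<bar>f (real i * L / 2^K)\<bar> \<le> c * (\<Sum>k\<le>K. r^k)" .
    moreover have "real j * L / 2^Suc K = real i * L / 2^K" using j by simp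
    ultimately show ?thesis using mono by simp
  next
    case False
    then obtain i where j: "j = 2*i+1" using oddE by blast
    with Suc.prems have "2*i+1 \<le> 2 * 2^K" by simp
    then have i: "i < 2^K" by simp
    from Suc.IH[of i] i have IH: "\<bar>f (real i * L / 2^K)\<bar> \<le> c * (\<Sum>k\<le>K. r^k)" by simp
    have "2*i < 2^Suc K" using i by simp
    note h = inc[OF this]
    have e1: "real (2*i) * L / 2^Suc K = real i * L / 2^K" by simp
    have e2: "(real (2*i) + 1) * L / 2^Suc K = real j * L / 2^Suc K" using j by simp
    from h have "\<bar>f (real j * L / 2^Suc K) - f (real i * L / 2^K)\<bar> \<le> c * r^Suc K"
      unfolding e2 e1 .
    then have "\<bar>f (real j * L / 2^Suc K)\<bar> \<le> c * (\<Sum>k\<le>K. r^k) + c * r^Suc K"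
      using IH by linarith
    then show ?thesis by (simp add: distrib_left)
  qed
qed

lemma sup_bound:
  fixes f :: "real \<Rightarrow> real"
  assumes L: "L > 0" and f0: "f 0 = 0" and r: "r \<ge> 0" "r < 1"
    and cont: "continuous_on {0..L} f"
    and inc: "\<And>k j. j < 2^k \<Longrightarrow> \<bar>f ((real j + 1) * L / 2^k) - f (real j * L / 2^k)\<bar> \<le> c * r^k"
    and u: "0 \<le> u" "u \<le> L"
  shows "\<bar>f u\<bar> \<le> c / (1 - r)"
proof -
  have cpos: "c \<ge> 0" using inc[of 0 0] by simp
  have S: "(\<Sum>k\<le>K. r^k) \<le> 1 / (1 - r)" for K
  proof -
    have "(\<Sum>k\<le>K. r^k) \<le> (\<Sum>k. r^k)"
      by (rule sum_le_suminf) (use r in auto)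
    then show ?thesis using suminf_geometric[of r] r by simp
  qed
  define j where "j K = nat \<lfloor>u * 2^K / L\<rfloor>" for K :: nat
  define x where "x K = real (j K) * L / 2^K" for K :: nat
  have jle: "j K \<le> 2^K" for K
  proof -
    have "u * 2^K / L \<le> 2^K" using u L by (simp add: divide_le_eq mult.commute mult_left_mono)
    then have "\<lfloor>u * 2^K / L\<rfloor> \<le> 2^K" by (metis floor_le_numeral floor_mono floor_numeral le_floor_iff of_int_numeral of_int_power floor_of_int) 
    then show ?thesis unfolding j_def by (simp add: nat_le_iff)
  qed
  have xb: "\<bar>f (x K)\<bar> \<le> c / (1 - r)" for K
  proof -
    have "\<bar>f (x K)\<bar> \<le> c * (\<Sum>k\<le>K. r^k)" unfolding x_def
      by (rule dyadic_bound[OF L f0 r(1) inc jle])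
    also have "\<dots> \<le> c * (1/(1-r))" using S cpos by (intro mult_left_mono) auto
    finally show ?thesis by simp
  qed
  have xrange: "x K \<in> {0..L}" for K
  proof -
    have "real (j K) \<le> 2^K" using jle[of K] by (metis of_nat_le_iff of_nat_numeral of_nat_power)
    then have "real (j K) * L / 2^K \<le> 2^K * L / 2^K" using L by (intro divide_right_mono mult_right_mono) auto
    then show ?thesis unfolding x_def using L by auto
  qed
  have xclose: "\<bar>x K - u\<bar> \<le> L / 2^K" for K
  proof -
    have fl0: "0 \<le> u * 2^K / L" using u L by simp
    then have jr: "real (j K) = of_int \<lfloor>u * 2^K / L\<rfloor>" unfolding j_def by simp
    have "of_int \<lfloor>u * 2^K / L\<rfloor> \<le> u * 2^K / L" "u * 2^K / L < of_int \<lfloor>u * 2^K / L\<rfloor> + 1"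
      by linarith+
    then have a: "real (j K) \<le> u * 2^K / L" "u * 2^K / L < real (j K) + 1" using jr by auto
    have "x K \<le> u" using a(1) L unfolding x_def by (simp add: field_simps)
    moreover have "u < x K + L / 2^K" using a(2) L unfolding x_def by (simp add: field_simps)
    ultimately show ?thesis by simp
  qed
  have "x \<longlonglongrightarrow> u"
  proof -
    have "(\<lambda>K. L / 2^K) \<longlonglongrightarrow> 0"
      using LIMSEQ_divide_realpow_zero[of 2 L] by simp
    then have "(\<lambda>K. x K - u) \<longlonglongrightarrow> 0"
      by (rule Lim_null_comparison[rotated]) (use xclose in simp)
    then show ?thesis by (simp add: LIM_zero_iff)
  qed
  then have "(\<lambda>K. f (x K)) \<longlonglongrightarrow> f u"
    using continuous_on_tendsto_compose[OF cont, of x u sequentially] xrange u by auto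
  then have "(\<lambda>K. \<bar>f (x K)\<bar>) \<longlonglongrightarrow> \<bar>f u\<bar>" by (rule tendsto_rabs)
  then show ?thesis by (rule LIMSEQ_le_const2) (use xb in auto)
qed

lemma BM_dyadic_AE:
  fixes B :: "real \<Rightarrow> 'a \<Rightarrow> real"
  assumes P: "prob_space M"
    and meas: "\<And>t. t \<ge> 0 \<Longrightarrow> B t \<in> borel_measurable M"
    and dist: "\<And>a b. 0 \<le> a \<Longrightarrow> a < b \<Longrightarrow> distributed M lborel (\<lambda>\<omega>. B b \<omega> - B a \<omega>) (\<lambda>x. ennreal (normal_density 0 (sqrt (b - a)) x))"
    and \<epsilon>: "\<epsilon> > 0"
  shows "AE \<omega> in M. \<exists>m0. \<forall>m\<ge>m0. \<forall>k j. j < (2::nat)^k \<longrightarrow>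
     \<bar>B ((real j + 1) * 2^m / 2^k) \<omega> - B (real j * 2^m / 2^k) \<omega>\<bar> \<le> (2 powr (1/2+\<epsilon>))^m * (9/10)^k"
proof -
  interpret prob_space M by fact
  define \<beta> :: real where "\<beta> = 2 powr (1/2+\<epsilon>)"
  define r :: real where "r = 9/10"
  define \<rho> :: real where "\<rho> = 4 / \<beta>^4"
  define q :: real where "q = 1 / (2 * r^4)"
  have \<beta>pos: "\<beta> > 0" unfolding \<beta>_def by simp
  have \<beta>4: "\<beta>^4 = 4 * 2 powr (4*\<epsilon>)"
  proof -
    have "\<beta>^4 = 2 powr (real 4 * (1/2+\<epsilon>))" unfolding \<beta>_def by (rule powr_power) simp
    also have "\<dots> = 2 powr (2 + 4*\<epsilon>)" by (simp add: algebra_simps)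
    also have "\<dots> = 4 * 2 powr (4*\<epsilon>)" by (simp add: powr_add)
    finally show ?thesis .
  qed
  have \<rho>: "0 < \<rho>" "\<rho> < 1"
  proof -
    have "1 < 2 powr (4*\<epsilon>)" using \<epsilon> by simp
    then show "0 < \<rho>" "\<rho> < 1" unfolding \<rho>_def \<beta>4 by auto
  qed
  have q: "0 < q" "q < 1" unfolding q_def r_def by (auto simp: power4_eq_xxxx)
  define a where "a m k = \<beta>^m * r^k" for m k :: nat
  define t where "t m k j = real j * 2^m / 2^k" for m k j :: nat
  define E where "E m k j = {\<omega>\<in>space M. a m k < \<bar>B (t m k (Suc j)) \<omega> - B (t m k j) \<omega>\<bar>}" for m k j :: nat
  define A where "A m = (\<Union>k. \<Union>j\<in>{..<(2::nat)^k}. E m k j)" for m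
  have tnn: "t m k j \<ge> 0" for m k j unfolding t_def by simp
  have tlt: "t m k j < t m k (Suc j)" for m k j unfolding t_def by (simp add: divide_strict_right_mono)
  have Esets: "E m k j \<in> sets M" for m k j
  proof -
    have [measurable]: "B (t m k (Suc j)) \<in> borel_measurable M" "B (t m k j) \<in> borel_measurable M"
      using meas tnn by auto
    show ?thesis unfolding E_def by measurable
  qed
  have Ejsets: "(\<Union>j\<in>{..<(2::nat)^k}. E m k j) \<in> sets M" for m k
    using Esets by auto
  have Asets: "A m \<in> sets M" for m unfolding A_def using Ejsets by auto
  have Ebound: "measure M (E m k j) \<le> 3 * \<rho>^m * (1/(4*r^4))^k" for m k j
  proof -
    define h where "h = t m k (Suc j) - t m k j"
    have h: "h = 2^m / 2^k" unfolding h_def t_def by (simp add: field_simps)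
    have hpos: "h > 0" unfolding h by simp
    have apos: "a m k > 0" unfolding a_def r_def using \<beta>pos by simp
    have "measure M (E m k j) \<le> 3 * (sqrt h)^4 / (a m k)^4"
      unfolding E_def
      by (rule normal_tail4[OF P _ _ apos]) (use dist[OF tnn tlt] hpos h_def in auto)
    also have "(sqrt h)^4 = h^2" using hpos by (simp add: power4_eq_xxxx power2_eq_square)
    also have "3 * h^2 / (a m k)^4 = 3 * \<rho>^m * (1/(4*r^4))^k"
    proof -
      have p: "((2::real)^n)^2 = 4^n" for n :: nat
        by (metis power_mult mult.commute power2_eq_square num_double numeral_times_numeral power_mult_numeral)
      have h2: "h^2 = 4^m / 4^k" unfolding h power_divide p ..
      have a4: "(a m k)^4 = (\<beta>^4)^m * (r^4)^k" unfolding a_def power_mult_distrib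
        by (simp only: power_mult[symmetric] mult.commute)
      have r1: "\<rho>^m = 4^m / (\<beta>^4)^m" unfolding \<rho>_def power_divide ..
      have r2: "(1/(4*r^4))^k = 1 / (4^k * (r^4)^k)" unfolding power_divide power_mult_distrib by simp
      have g: "\<And>X Y Z W::real. 3*(X/Z)/(Y*W) = 3*(X/Y)*(1/(Z*W))" by simp
      show ?thesis unfolding h2 a4 r1 r2 by (rule g)
    qed
    finally show ?thesis .
  qed
  have Ejbound: "measure M (\<Union>j\<in>{..<(2::nat)^k}. E m k j) \<le> 3 * \<rho>^m * q^k" for m k
  proof -
    have "measure M (\<Union>j\<in>{..<(2::nat)^k}. E m k j) \<le> (\<Sum>j\<in>{..<(2::nat)^k}. measure M (E m k j))"
      by (rule measure_UNION_le) (use Esets in auto)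
    also have "\<dots> \<le> (\<Sum>j\<in>{..<(2::nat)^k}. 3 * \<rho>^m * (1/(4*r^4))^k)"
      by (rule sum_mono) (rule Ebound)
    also have "\<dots> = 2^k * (3 * \<rho>^m * (1/(4*r^4))^k)" by simp
    also have "\<dots> = 3 * \<rho>^m * q^k"
    proof -
      have r2: "(1/(4*r^4))^k = 1 / (4^k * (r^4)^k)" unfolding power_divide power_mult_distrib by simp
      have r3: "q^k = 1 / (2^k * (r^4)^k)" unfolding q_def power_divide power_mult_distrib by simp
      have f: "(4::real)^k = 2^k * 2^k" by (simp flip: power_mult_distrib)
      have g: "\<And>X Y Z W::real. X \<noteq> 0 \<Longrightarrow> X * (Y * (1 / (X * X * W))) = Y * (1 / (X * W))" by simp
      show ?thesis unfolding r2 r3 f by (rule g) simp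
    qed
    finally show ?thesis .
  qed
  have Abound: "measure M (A m) \<le> 3 * \<rho>^m / (1 - q)" for m
  proof -
    have sg: "summable (\<lambda>k. 3 * \<rho>^m * q^k)"
      using q by (intro summable_mult summable_geometric) auto
    have sm: "summable (\<lambda>k. measure M (\<Union>j\<in>{..<(2::nat)^k}. E m k j))"
      by (rule summable_comparison_test'[OF sg]) (use Ejbound in auto)
    have "measure M (A m) \<le> (\<Sum>k. measure M (\<Union>j\<in>{..<(2::nat)^k}. E m k j))"
      unfolding A_def by (rule finite_measure_subadditive_countably) (use Ejsets sm in auto)
    also have "\<dots> \<le> (\<Sum>k. 3 * \<rho>^m * q^k)"
      by (rule suminf_le[OF _ sm sg]) (rule Ejbound)
    also have "\<dots> = 3 * \<rho>^m / (1 - q)"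
      using suminf_mult[OF summable_geometric[of q]] suminf_geometric[of q] q by simp
    finally show ?thesis .
  qed
  have sA: "summable (\<lambda>m. measure M (A m))"
  proof -
    have sg: "summable (\<lambda>m. 3 / (1 - q) * \<rho>^m)"
      using \<rho> by (intro summable_mult summable_geometric) auto
    show ?thesis
      by (rule summable_comparison_test'[OF sg]) (use Abound in auto)
  qed
  have "AE \<omega> in M. eventually (\<lambda>m. \<omega> \<in> space M - A m) sequentially"
    by (rule borel_cantelli_AE1[OF Asets _ sA]) (simp add: emeasure_eq_measure)
  then show ?thesis
  proof (rule AE_mp, intro AE_I2 impI)
    fix \<omega> assume \<omega>: "\<omega> \<in> space M" and ev: "eventually (\<lambda>m. \<omega> \<in> space M - A m) sequentially"
    then obtain m0 where m0: "\<And>m. m \<ge> m0 \<Longrightarrow> \<omega> \<notin> A m" unfolding eventually_sequentially by auto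
    show "\<exists>m0. \<forall>m\<ge>m0. \<forall>k j. j < (2::nat)^k \<longrightarrow>
     \<bar>B ((real j + 1) * 2^m / 2^k) \<omega> - B (real j * 2^m / 2^k) \<omega>\<bar> \<le> (2 powr (1/2+\<epsilon>))^m * (9/10)^k"
    proof (intro exI allI impI)
      fix m k j assume "m0 \<le> m" "j < (2::nat)^k"
      then have "\<omega> \<notin> E m k j" using m0[of m] unfolding A_def by auto
      then show "\<bar>B ((real j + 1) * 2^m / 2^k) \<omega> - B (real j * 2^m / 2^k) \<omega>\<bar> \<le> (2 powr (1/2+\<epsilon>))^m * (9/10)^k"
        using \<omega> unfolding E_def a_def t_def \<beta>_def r_def by (simp add: add.commute not_less)
    qed
  qed
qed

lemma growth_from_dyadic:
  fixes f :: "real \<Rightarrow> real"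
  assumes f0: "f 0 = 0" and cont: "continuous_on {0..} f" and \<epsilon>: "\<epsilon> > 0"
    and dy: "\<forall>m\<ge>m0. \<forall>k j. j < (2::nat)^k \<longrightarrow>
       \<bar>f ((real j + 1) * 2^m / 2^k) - f (real j * 2^m / 2^k)\<bar> \<le> (2 powr (1/2+\<epsilon>))^m * (9/10)^k"
  shows "\<exists>K. \<forall>u\<ge>0. \<bar>f u\<bar> \<le> K * (1+u) powr (1/2+\<epsilon>)"
proof -
  define \<alpha> :: real where "\<alpha> = 1/2+\<epsilon>"
  define \<beta> :: real where "\<beta> = 2 powr \<alpha>"
  have \<alpha>: "\<alpha> > 0" unfolding \<alpha>_def using \<epsilon> by simp
  have \<beta>pos: "\<beta> > 0" unfolding \<beta>_def by simp
  have bnd: "\<bar>f u\<bar> \<le> 10 * \<beta>^m" if "m \<ge> m0" "0 \<le> u" "u \<le> 2^m" for m u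
  proof -
    have c1: "continuous_on {0..2^m} f" by (rule continuous_on_subset[OF cont]) auto
    have inc: "\<And>k j. j < (2::nat)^k \<Longrightarrow> \<bar>f ((real j + 1) * 2^m / 2^k) - f (real j * 2^m / 2^k)\<bar> \<le> \<beta>^m * (9/10)^k"
      using dy \<open>m \<ge> m0\<close> unfolding \<beta>_def \<alpha>_def by blast
    have "\<bar>f u\<bar> \<le> \<beta>^m / (1 - 9/10)"
      by (rule sup_bound[where L="2^m" and r="9/10" and c="\<beta>^m", OF _ f0 _ _ c1 inc]) (use that in auto)
    then show ?thesis by simp
  qed
  define K where "K = 10 * (\<beta>^m0 + \<beta>)"
  have Kpos: "K \<ge> 0" unfolding K_def using \<beta>pos by simp
  have "\<bar>f u\<bar> \<le> K * (1+u) powr \<alpha>" if u: "u \<ge> 0" for u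
  proof -
    have pw1: "1 \<le> (1+u) powr \<alpha>" using u \<alpha> by (intro ge_one_powr_ge_zero) auto
    show ?thesis
    proof (cases "u \<le> 2^m0")
      case True
      then have "\<bar>f u\<bar> \<le> 10 * \<beta>^m0" using bnd[of m0 u] u by simp
      also have "\<dots> \<le> K" unfolding K_def using \<beta>pos by simp
      also have "\<dots> \<le> K * (1+u) powr \<alpha>" using Kpos pw1 by (simp add: mult_le_cancel_left1)
      finally show ?thesis .
    next
      case False
      then have ugt: "u > 2^m0" by simp
      have u1: "u > 1" using ugt one_le_power[of "2::real" m0] by linarith
      have ex: "\<exists>n. u \<le> 2^n" using real_arch_pow[of 2 u] by (auto intro: less_imp_le)
      define n where "n = (LEAST n. u \<le> (2::real)^n)"
      have un: "u \<le> 2^n" unfolding n_def by (rule LeastI_ex[OF ex])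
      have nm0: "n \<ge> m0"
      proof (rule ccontr)
        assume "\<not> n \<ge> m0"
        then have "(2::real)^n \<le> 2^m0" by (intro power_increasing) auto
        then show False using un ugt by linarith
      qed
      have n0: "n \<noteq> 0" using un u1 by (cases n) auto
      have "\<not> u \<le> 2^(n-1)" unfolding n_def
        by (rule not_less_Least) (use n0 n_def in simp)
      then have "2^n < 2 * u" using n0 by (cases n) auto
      have "\<beta>^n = (2^n) powr \<alpha>"
      proof -
        have "\<beta>^n = 2 powr (real n * \<alpha>)" unfolding \<beta>_def by (rule powr_power) simp
        also have "\<dots> = (2 powr real n) powr \<alpha>" by (simp add: powr_powr)
        also have "\<dots> = (2^n) powr \<alpha>" by (simp add: powr_realpow)
        finally show ?thesis .
      qed
      also have "\<dots> \<le> (2*u) powr \<alpha>" using \<open>2^n < 2*u\<close> \<alpha> by (intro powr_mono2) auto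
      also have "\<dots> = \<beta> * u powr \<alpha>" unfolding \<beta>_def by (simp add: powr_mult)
      also have "\<dots> \<le> \<beta> * (1+u) powr \<alpha>" using \<beta>pos \<alpha> u by (intro mult_left_mono powr_mono2) auto
      finally have "\<beta>^n \<le> \<beta> * (1+u) powr \<alpha>" .
      then have "\<bar>f u\<bar> \<le> 10 * (\<beta> * (1+u) powr \<alpha>)" using bnd[OF nm0 u un] by simp
      also have "\<dots> \<le> K * (1+u) powr \<alpha>" unfolding K_def using \<beta>pos pw1
        by (simp add: algebra_simps)
      finally show ?thesis .
    qed
  qed
  then show ?thesis unfolding \<alpha>_def by blast
qed

lemma unif_cont_vanish:
  fixes f :: "real \<times> real \<Rightarrow> real"
  assumes cont: "continuous_on {(s, t). 1 \<le> s \<and> s \<le> t} f"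
    and van: "\<And>e. e > 0 \<Longrightarrow> \<exists>T. \<forall>s t. 1 \<le> s \<longrightarrow> s \<le> t \<longrightarrow> T \<le> t \<longrightarrow> \<bar>f (s, t)\<bar> < e"
  shows "bounded (f ` {(s, t). 1 \<le> s \<and> s \<le> t}) \<and> uniformly_continuous_on {(s, t). 1 \<le> s \<and> s \<le> t} f"
proof -
  define S where "S = {(s, t). 1 \<le> s \<and> s \<le> (t::real)}"
  have S': "S = {x. 1 \<le> fst x} \<inter> {x. fst x \<le> snd x}" unfolding S_def by auto
  have clS: "closed S" unfolding S'
    by (intro closed_Int closed_Collect_le continuous_on_fst continuous_on_snd continuous_on_const continuous_on_id)
  define C where "C T = S \<inter> ({1..T} \<times> {1..T})" for T :: real
  have cC: "compact (C T)" for T unfolding C_def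
    by (intro closed_Int_compact clS compact_Times compact_Icc)
  have Csub: "x \<in> S \<Longrightarrow> snd x \<le> T \<Longrightarrow> x \<in> C T" for x T
    unfolding C_def S_def by auto
  have contC: "continuous_on (C T) f" for T
    by (rule continuous_on_subset[OF cont[folded S_def]]) (auto simp: C_def)
  have van': "\<exists>T. \<forall>x\<in>S. T \<le> snd x \<longrightarrow> \<bar>f x\<bar> < e" if epos: "e > 0" for e
  proof -
    obtain T where T: "\<forall>s t. 1 \<le> s \<longrightarrow> s \<le> t \<longrightarrow> T \<le> t \<longrightarrow> \<bar>f (s, t)\<bar> < e" using van[OF epos] by blast
    show ?thesis by (rule exI[of _ T]) (use T in \<open>auto simp: S_def\<close>)
  qed
  have bnd: "bounded (f ` S)"
  proof -
    obtain T where T: "\<forall>x\<in>S. T \<le> snd x \<longrightarrow> \<bar>f x\<bar> < 1" using van'[of 1] by auto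
    have b1: "bounded (f ` C T)" by (intro compact_imp_bounded compact_continuous_image contC cC)
    have "f ` S \<subseteq> f ` C T \<union> cball 0 1"
    proof
      fix y assume "y \<in> f ` S"
      then obtain x where x: "x \<in> S" "y = f x" by auto
      show "y \<in> f ` C T \<union> cball 0 1"
      proof (cases "snd x \<le> T")
        case True then show ?thesis using x Csub by auto
      next
        case False then show ?thesis using x T by (auto simp: dist_real_def)
      qed
    qed
    then show ?thesis using b1 bounded_Un bounded_cball bounded_subset by metis
  qed
  have uc: "uniformly_continuous_on S f"
    unfolding uniformly_continuous_on_def
  proof (intro allI impI)
    fix e :: real assume e: "e > 0"
    obtain T where T: "\<forall>x\<in>S. T \<le> snd x \<longrightarrow> \<bar>f x\<bar> < e/2" using van'[of "e/2"] e by auto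
    have "uniformly_continuous_on (C (T+1)) f"
      by (intro compact_uniformly_continuous contC cC)
    then obtain d0 where d0: "d0 > 0" "\<forall>x\<in>C (T+1). \<forall>x'\<in>C (T+1). dist x' x < d0 \<longrightarrow> dist (f x') (f x) < e"
      unfolding uniformly_continuous_on_def using e by metis
    show "\<exists>d>0. \<forall>x\<in>S. \<forall>x'\<in>S. dist x' x < d \<longrightarrow> dist (f x') (f x) < e"
    proof (intro exI[of _ "min d0 1"] conjI ballI impI)
      show "min d0 1 > 0" using d0 by simp
      fix x x' assume x: "x \<in> S" and x': "x' \<in> S" and dx: "dist x' x < min d0 1"
      have ds: "\<bar>snd x' - snd x\<bar> < 1" using dist_snd_le[of x' x] dx by (simp add: dist_real_def)
      show "dist (f x') (f x) < e"
      proof (cases "snd x \<le> T + 1 \<and> snd x' \<le> T + 1")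
        case True
        then show ?thesis using d0(2) Csub[OF x] Csub[OF x'] dx by auto
      next
        case False
        then have "T \<le> snd x" "T \<le> snd x'" using ds by auto
        then have "\<bar>f x\<bar> < e/2" "\<bar>f x'\<bar> < e/2" using T x x' by auto
        then show ?thesis by (simp add: dist_real_def)
      qed
    qed
  qed
  show ?thesis using bnd uc unfolding S_def by blast
qed

lemma normIp_le: "normIp (y :: real ^ 'n) \<le> norm y"
proof -
  have c: "real CARD('n) \<ge> 1" by (simp add: Suc_leI)
  have yy: "0 \<le> y \<bullet> y" by simp
  have "y \<bullet> y * 1 \<le> y \<bullet> y * real CARD('n)" using c yy by (intro mult_left_mono)
  then have "y \<bullet> y / real CARD('n) \<le> y \<bullet> y" using c by (simp add: pos_divide_le_eq)
  then show ?thesis unfolding normIp_def norm_eq_sqrt_inner by (rule real_sqrt_le_mono)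
qed

lemma normIp_nonneg: "normIp y \<ge> 0" unfolding normIp_def by simp

lemma D_good:
  fixes V U :: "real \<Rightarrow> 'a \<Rightarrow> real ^ 'p"
  assumes cont: "continuous_on {0..} (\<lambda>u. V u \<omega>)"
    and gr: "\<And>u. u \<ge> 0 \<Longrightarrow> norm (V u \<omega>) \<le> K * (1+u) powr (1/2+\<eta>/2)"
    and \<eta>: "\<eta> > 0"
  shows "bounded (D_eta \<eta> V U \<omega> ` {(s,t). 1 \<le> s \<and> s \<le> t}) \<and> uniformly_continuous_on {(s,t). 1 \<le> s \<and> s \<le> t} (D_eta \<eta> V U \<omega>)"
proof (rule unif_cont_vanish)
  define S where "S = {(s, t). 1 \<le> s \<and> s \<le> (t::real)}"
  have eq: "D_eta \<eta> V U \<omega> = (\<lambda>x. snd x powr (-3/2-\<eta>) * normIp ((snd x - fst x) *\<^sub>R U 1 \<omega> + snd x *\<^sub>R V (fst x - 1) \<omega> - fst x *\<^sub>R V (snd x - 1) \<omega>))"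
    by (auto simp: D_eta_def fun_eq_iff)
  have c1: "continuous_on S (\<lambda>x. V (fst x - 1) \<omega>)"
    by (rule continuous_on_compose2[OF cont]) (auto intro!: continuous_intros simp: S_def)
  have c2: "continuous_on S (\<lambda>x. V (snd x - 1) \<omega>)"
    by (rule continuous_on_compose2[OF cont]) (auto intro!: continuous_intros simp: S_def)
  show "continuous_on {(s, t). 1 \<le> s \<and> s \<le> t} (D_eta \<eta> V U \<omega>)"
    unfolding S_def[symmetric] eq normIp_def
    by (intro continuous_intros c1 c2) (auto simp: S_def)
next
  fix e :: real assume e: "e > 0"
  define \<alpha> where "\<alpha> = 1/2+\<eta>/2"
  define n2 where "n2 = norm (U 1 \<omega>)"
  have K: "K \<ge> 0" using gr[of 0] norm_ge_zero[of "V 0 \<omega>"] by (simp del: norm_ge_zero)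
  define g where "g t = n2 * t powr (-1/2-\<eta>) + 2*K*2 powr \<alpha> * t powr (-\<eta>/2)" for t :: real
  have "(g \<longlongrightarrow> 0) at_top"
  proof -
    have "((\<lambda>t. t powr (-1/2-\<eta>)) \<longlongrightarrow> 0) at_top" using \<eta> by (intro tendsto_neg_powr filterlim_ident) auto
    moreover have "((\<lambda>t. t powr (-\<eta>/2)) \<longlongrightarrow> 0) at_top" using \<eta> by (intro tendsto_neg_powr filterlim_ident) auto
    ultimately have "((\<lambda>t. n2 * t powr (-1/2-\<eta>) + 2*K*2 powr \<alpha> * t powr (-\<eta>/2)) \<longlongrightarrow> n2 * 0 + 2*K*2 powr \<alpha> * 0) at_top"
      by (intro tendsto_intros)
    then show ?thesis unfolding g_def by simp
  qed
  then have "eventually (\<lambda>t. g t < e) at_top" using e by (rule order_tendstoD)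
  then obtain T0 where T0: "\<And>t. t \<ge> T0 \<Longrightarrow> g t < e" unfolding eventually_at_top_linorder by auto
  show "\<exists>T. \<forall>s t. 1 \<le> s \<longrightarrow> s \<le> t \<longrightarrow> T \<le> t \<longrightarrow> \<bar>D_eta \<eta> V U \<omega> (s, t)\<bar> < e"
  proof (intro exI[of _ "max T0 1"] allI impI)
    fix s t :: real assume s: "1 \<le> s" and st: "s \<le> t" and tT: "max T0 1 \<le> t"
    have t1: "t \<ge> 1" using s st by simp
    define y where "y = (t - s) *\<^sub>R U 1 \<omega> + t *\<^sub>R V (s - 1) \<omega> - s *\<^sub>R V (t - 1) \<omega>"
    have D: "D_eta \<eta> V U \<omega> (s, t) = t powr (-3/2-\<eta>) * normIp y" unfolding D_eta_def y_def by simp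
    have pa: "(1+t) powr \<alpha> \<ge> 0" by simp
    have b1: "norm (V (s - 1) \<omega>) \<le> K * (1+t) powr \<alpha>"
    proof -
      have "norm (V (s - 1) \<omega>) \<le> K * (1 + (s-1)) powr \<alpha>" using gr[of "s-1"] s unfolding \<alpha>_def by simp
      also have "\<dots> \<le> K * (1+t) powr \<alpha>" using K s st \<eta> unfolding \<alpha>_def by (intro mult_left_mono powr_mono2) auto
      finally show ?thesis .
    qed
    have b2: "norm (V (t - 1) \<omega>) \<le> K * (1+t) powr \<alpha>"
    proof -
      have "norm (V (t - 1) \<omega>) \<le> K * (1 + (t-1)) powr \<alpha>" using gr[of "t-1"] t1 unfolding \<alpha>_def by simp
      also have "\<dots> \<le> K * (1+t) powr \<alpha>" using K t1 \<eta> unfolding \<alpha>_def by (intro mult_left_mono powr_mono2) auto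
      finally show ?thesis .
    qed
    have ny: "norm y \<le> t * (n2 + 2 * K * (1+t) powr \<alpha>)"
    proof -
      have "norm y \<le> norm ((t - s) *\<^sub>R U 1 \<omega>) + norm (t *\<^sub>R V (s - 1) \<omega>) + norm (s *\<^sub>R V (t - 1) \<omega>)"
        unfolding y_def
        using norm_triangle_ineq4[of "(t - s) *\<^sub>R U 1 \<omega> + t *\<^sub>R V (s - 1) \<omega>" "s *\<^sub>R V (t - 1) \<omega>"]
          norm_triangle_ineq[of "(t - s) *\<^sub>R U 1 \<omega>" "t *\<^sub>R V (s - 1) \<omega>"] by linarith
      also have "\<dots> = (t - s) * n2 + t * norm (V (s - 1) \<omega>) + s * norm (V (t - 1) \<omega>)"
        using s st unfolding n2_def by simp
      also have "\<dots> \<le> t * n2 + t * (K * (1+t) powr \<alpha>) + t * (K * (1+t) powr \<alpha>)"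
      proof -
        have "(t - s) * n2 \<le> t * n2" using s unfolding n2_def by (intro mult_right_mono) auto
        moreover have "t * norm (V (s - 1) \<omega>) \<le> t * (K * (1+t) powr \<alpha>)" using b1 t1 by (intro mult_left_mono) auto
        moreover have "s * norm (V (t - 1) \<omega>) \<le> t * (K * (1+t) powr \<alpha>)"
        proof -
          have "s * norm (V (t - 1) \<omega>) \<le> t * norm (V (t - 1) \<omega>)" using st by (intro mult_right_mono) auto
          also have "\<dots> \<le> t * (K * (1+t) powr \<alpha>)" using b2 t1 by (intro mult_left_mono) auto
          finally show ?thesis .
        qed
        ultimately show ?thesis by linarith
      qed
      also have "\<dots> = t * (n2 + 2 * K * (1+t) powr \<alpha>)" by (simp add: algebra_simps)
      finally show ?thesis .
    qed
    have tp: "t powr (-3/2-\<eta>) * t = t powr (-1/2-\<eta>)"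
    proof -
      have "t powr (-1/2-\<eta>) = t powr ((-3/2-\<eta>) + 1)" by simp
      also have "\<dots> = t powr (-3/2-\<eta>) * t powr 1" by (rule powr_add)
      also have "\<dots> = t powr (-3/2-\<eta>) * t" using t1 by simp
      finally show ?thesis by simp
    qed
    have tp2: "t powr (-1/2-\<eta>) * t powr \<alpha> = t powr (-\<eta>/2)"
      unfolding \<alpha>_def by (simp add: powr_add[symmetric])
    have one: "(1+t) powr \<alpha> \<le> 2 powr \<alpha> * t powr \<alpha>"
    proof -
      have "(1+t) powr \<alpha> \<le> (2*t) powr \<alpha>" using t1 \<eta> unfolding \<alpha>_def by (intro powr_mono2) auto
      then show ?thesis by (simp add: powr_mult)
    qed
    have "D_eta \<eta> V U \<omega> (s, t) \<le> t powr (-3/2-\<eta>) * (t * (n2 + 2 * K * (1+t) powr \<alpha>))"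
      unfolding D by (intro mult_left_mono order_trans[OF normIp_le ny]) simp
    also have "\<dots> = t powr (-1/2-\<eta>) * (n2 + 2 * K * (1+t) powr \<alpha>)"
      by (simp only: mult.assoc[symmetric] tp)
    also have "\<dots> \<le> t powr (-1/2-\<eta>) * (n2 + 2 * K * (2 powr \<alpha> * t powr \<alpha>))"
      using one K by (intro mult_left_mono add_left_mono) auto
    also have "\<dots> = n2 * t powr (-1/2-\<eta>) + 2*K*2 powr \<alpha> * (t powr (-1/2-\<eta>) * t powr \<alpha>)"
      by (simp only: algebra_simps)
    also have "\<dots> = g t" unfolding g_def tp2 ..
    also have "\<dots> < e" using T0 tT by simp
    finally have "D_eta \<eta> V U \<omega> (s, t) < e" .
    moreover have "D_eta \<eta> V U \<omega> (s, t) \<ge> 0" unfolding D by (intro mult_nonneg_nonneg normIp_nonneg) simp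
    ultimately show "\<bar>D_eta \<eta> V U \<omega> (s, t)\<bar> < e" by simp
  qed
qed

theorem lemmaA2:
  fixes M :: "'a measure" and W1 W2 :: "real \<Rightarrow> 'a \<Rightarrow> real ^ 'p" and \<eta> :: real
  assumes "indep_std_BM_pair M W1 W2" and "\<eta> > 0"
  shows "AE \<omega> in M. bounded (D_eta \<eta> W1 W2 \<omega> ` {(s, t). 1 \<le> s \<and> s \<le> t})
                 \<and> uniformly_continuous_on {(s, t). 1 \<le> s \<and> s \<le> t} (D_eta \<eta> W1 W2 \<omega>)"
proof -
  define Bf where "Bf = (\<lambda>(j, i) t \<omega>. (if j then W2 t \<omega> else W1 t \<omega>) $ i)"
  have I: "indep_std_BMs M (UNIV :: (bool \<times> 'p) set) Bf"
    using assms(1) unfolding indep_std_BM_pair_def Bf_def .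
  have P: "prob_space M"
    and meas: "\<forall>i\<in>(UNIV :: (bool \<times> 'p) set). \<forall>t\<ge>0. Bf i t \<in> borel_measurable M"
    and cont: "\<forall>i\<in>(UNIV :: (bool \<times> 'p) set). \<forall>\<omega>\<in>space M. Bf i 0 \<omega> = 0 \<and> continuous_on {0..} (\<lambda>t. Bf i t \<omega>)"
    and idist: "\<forall>(n::nat) (ts::nat \<Rightarrow> real). 0 \<le> ts 0 \<and> (\<forall>k<n. ts k < ts (Suc k)) \<longrightarrow>
        (\<forall>i\<in>(UNIV :: (bool \<times> 'p) set). \<forall>k<n. distributed M lborel (\<lambda>\<omega>. Bf i (ts (Suc k)) \<omega> - Bf i (ts k) \<omega>)
            (normal_density 0 (sqrt (ts (Suc k) - ts k))))"
    using I unfolding indep_std_BMs_def by blast+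
  interpret prob_space M by (rule P)
  define \<alpha> where "\<alpha> = 1/2 + \<eta>/2"
  have coord: "AE \<omega> in M. \<exists>K. \<forall>u\<ge>0. \<bar>W1 u \<omega> $ i\<bar> \<le> K * (1+u) powr \<alpha>" for i
  proof -
    define B where "B t \<omega> = W1 t \<omega> $ i" for t \<omega>
    have BB: "B = Bf (False, i)" unfolding B_def Bf_def by (simp add: fun_eq_iff)
    have measB: "\<And>t. t \<ge> 0 \<Longrightarrow> B t \<in> borel_measurable M" using meas unfolding BB by blast
    have contB: "\<And>\<omega>. \<omega> \<in> space M \<Longrightarrow> B 0 \<omega> = 0 \<and> continuous_on {0..} (\<lambda>t. B t \<omega>)"
      using cont unfolding BB by blast
    have distB: "distributed M lborel (\<lambda>\<omega>. B b \<omega> - B a \<omega>) (\<lambda>x. ennreal (normal_density 0 (sqrt (b - a)) x))"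
      if ab: "0 \<le> a" "a < b" for a b
    proof -
      define ts :: "nat \<Rightarrow> real" where "ts k = (if k = 0 then a else b)" for k
      have "0 \<le> ts 0 \<and> (\<forall>k<1. ts k < ts (Suc k))" using ab unfolding ts_def by simp
      then have "\<forall>i\<in>(UNIV :: (bool \<times> 'p) set). \<forall>k<1. distributed M lborel (\<lambda>\<omega>. Bf i (ts (Suc k)) \<omega> - Bf i (ts k) \<omega>)
            (normal_density 0 (sqrt (ts (Suc k) - ts k)))"
        using idist by blast
      then have "distributed M lborel (\<lambda>\<omega>. Bf (False, i) (ts (Suc 0)) \<omega> - Bf (False, i) (ts 0) \<omega>)
            (normal_density 0 (sqrt (ts (Suc 0) - ts 0)))" by blast
      then show ?thesis unfolding BB ts_def by simp
    qed
    have e2: "\<eta>/2 > 0" using assms(2) by simp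
    have "AE \<omega> in M. \<exists>m0. \<forall>m\<ge>m0. \<forall>k j. j < (2::nat)^k \<longrightarrow>
       \<bar>B ((real j + 1) * 2^m / 2^k) \<omega> - B (real j * 2^m / 2^k) \<omega>\<bar> \<le> (2 powr (1/2+\<eta>/2))^m * (9/10)^k"
      by (rule BM_dyadic_AE[OF P measB distB e2])
    then show ?thesis
    proof (rule AE_mp, intro AE_I2 impI)
      fix \<omega> assume \<omega>: "\<omega> \<in> space M" and "\<exists>m0. \<forall>m\<ge>m0. \<forall>k j. j < (2::nat)^k \<longrightarrow>
       \<bar>B ((real j + 1) * 2^m / 2^k) \<omega> - B (real j * 2^m / 2^k) \<omega>\<bar> \<le> (2 powr (1/2+\<eta>/2))^m * (9/10)^k"
      then obtain m0 where m0: "\<forall>m\<ge>m0. \<forall>k j. j < (2::nat)^k \<longrightarrow>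
       \<bar>B ((real j + 1) * 2^m / 2^k) \<omega> - B (real j * 2^m / 2^k) \<omega>\<bar> \<le> (2 powr (1/2+\<eta>/2))^m * (9/10)^k" by blast
      have "\<exists>K. \<forall>u\<ge>0. \<bar>B u \<omega>\<bar> \<le> K * (1+u) powr (1/2+\<eta>/2)"
        by (rule growth_from_dyadic[OF _ _ e2 m0]) (use contB[OF \<omega>] in auto)
      then show "\<exists>K. \<forall>u\<ge>0. \<bar>W1 u \<omega> $ i\<bar> \<le> K * (1+u) powr \<alpha>" unfolding B_def \<alpha>_def .
    qed
  qed
  have "AE \<omega> in M. \<forall>i\<in>UNIV. \<exists>K. \<forall>u\<ge>0. \<bar>W1 u \<omega> $ i\<bar> \<le> K * (1+u) powr \<alpha>"
    by (rule AE_finite_allI) (simp_all add: coord)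
  then show ?thesis
  proof (rule AE_mp, intro AE_I2 impI)
    fix \<omega> assume \<omega>: "\<omega> \<in> space M" and "\<forall>i\<in>UNIV. \<exists>K. \<forall>u\<ge>0. \<bar>W1 u \<omega> $ i\<bar> \<le> K * (1+u) powr \<alpha>"
    then have "\<forall>i. \<exists>K. \<forall>u\<ge>0. \<bar>W1 u \<omega> $ i\<bar> \<le> K * (1+u) powr \<alpha>" by simp
    from choice[OF this] obtain Kf where Kf0: "\<forall>i. \<forall>u\<ge>0. \<bar>W1 u \<omega> $ i\<bar> \<le> Kf i * (1+u) powr \<alpha>" by blast
    then have Kf: "\<And>i u. u \<ge> 0 \<Longrightarrow> \<bar>W1 u \<omega> $ i\<bar> \<le> Kf i * (1+u) powr \<alpha>" by blast
    have contW: "continuous_on {0..} (\<lambda>u. W1 u \<omega>)"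
    proof -
      have ci: "continuous_on {0..} (\<lambda>u. W1 u \<omega> $ i)" for i
      proof -
        have "Bf (False, i) 0 \<omega> = 0 \<and> continuous_on {0..} (\<lambda>t. Bf (False, i) t \<omega>)" using cont \<omega> by blast
        then show ?thesis unfolding Bf_def by simp
      qed
      have "continuous_on {0..} (\<lambda>u. \<chi> i. W1 u \<omega> $ i)" by (intro continuous_on_vec_lambda ci)
      then show ?thesis by simp
    qed
    have grW: "norm (W1 u \<omega>) \<le> (\<Sum>i\<in>UNIV. Kf i) * (1+u) powr (1/2+\<eta>/2)" if "u \<ge> 0" for u
    proof -
      have "norm (W1 u \<omega>) \<le> (\<Sum>i\<in>UNIV. \<bar>W1 u \<omega> $ i\<bar>)" by (rule norm_le_l1_cart)
      also have "\<dots> \<le> (\<Sum>i\<in>UNIV. Kf i * (1+u) powr \<alpha>)" by (intro sum_mono Kf that)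
      also have "\<dots> = (\<Sum>i\<in>UNIV. Kf i) * (1+u) powr (1/2+\<eta>/2)" unfolding \<alpha>_def by (simp add: sum_distrib_right)
      finally show ?thesis .
    qed
    show "bounded (D_eta \<eta> W1 W2 \<omega> ` {(s, t). 1 \<le> s \<and> s \<le> t})
                 \<and> uniformly_continuous_on {(s, t). 1 \<le> s \<and> s \<le> t} (D_eta \<eta> W1 W2 \<omega>)"
      by (rule D_good[where V=W1 and \<omega>=\<omega> and U=W2, OF contW grW assms(2)])
  qed
qed

end
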